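(* For every integer $d\geq 1$ and every finite abelian group $A$, the wreath product $A\wr\mathbb{Z}^d=\left(\bigoplus_{g\in\mathbb{Z}^d}A\right)\rtimes\mathbb{Z}^d$ (with $\mathbb{Z}^d$ acting by shifting coordinates) embeds in $\mathrm{IET}$.
   Context: $\mathrm{IET}$ denotes the group of interval exchange transformations of $[0,1)$: bijections of $[0,1)$ that are orientation-preserving piecewise isometries (piecewise translations), left-continuous, with finitely many discontinuity points. *)

theory Defs
  imports Complex_Main "HOL-Algebra.Group"
begin

text \<open>Interval exchange transformations of [0,1). Maps are normalised to be the
identity outside [0,1) so that equality of IETs is equality of functions.
A map is an IET if it is a bijection of [0,1) and there is a finite subdivision
0 = a_0 < a_1 < ... < a_n = 1 such that f is a translation on each [a_i, a_(i+1)).\<close>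

definition IET :: "(real \<Rightarrow> real) set" where
  "IET = {f. bij_betw f {0..<1} {0..<1}
            \<and> (\<forall>x. x \<notin> {0..<1} \<longrightarrow> f x = x)
            \<and> (\<exists>(a::nat \<Rightarrow> real) n. a 0 = 0 \<and> a n = 1 \<and> (\<forall>i<n. a i < a (Suc i))
                 \<and> (\<forall>i<n. \<exists>c. \<forall>x\<in>{a i..<a (Suc i)}. f x = x + c))}"

definition IET_group :: "(real \<Rightarrow> real) monoid" where
  "IET_group = \<lparr>carrier = IET, mult = (\<lambda>f g. f \<circ> g), one = id\<rparr>"

definition Zd :: "nat \<Rightarrow> (nat \<Rightarrow> int) set" where
  "Zd d = {v. \<forall>i\<ge>d. v i = 0}"

text \<open>Wreath product A wr Z^d = (direct sum over Z^d of A) semidirect Z^d, with Z^d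
acting by shifting coordinates: (z . f)(g) = f(g - z).\<close>

definition wreath_prod :: "('a, 'b) monoid_scheme \<Rightarrow> nat \<Rightarrow> (((nat \<Rightarrow> int) \<Rightarrow> 'a) \<times> (nat \<Rightarrow> int)) monoid" where
  "wreath_prod A d = \<lparr>
     carrier = {(f, z). z \<in> Zd d \<and> (\<forall>g\<in>Zd d. f g \<in> carrier A)
                 \<and> (\<forall>g. g \<notin> Zd d \<longrightarrow> f g = \<one>\<^bsub>A\<^esub>)
                 \<and> finite {g. f g \<noteq> \<one>\<^bsub>A\<^esub>}},
     mult = (\<lambda>(f, z) (f', z'). (\<lambda>g. f g \<otimes>\<^bsub>A\<^esub> f' (\<lambda>i. g i - z i), \<lambda>i. z i + z' i)),
     one = (\<lambda>g. \<one>\<^bsub>A\<^esub>, \<lambda>i. 0)\<rparr>"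

end

theory Submission
  imports Defs "HOL-Algebra.FiniteProduct" "HOL-Library.Countable_Set" "HOL-Analysis.Continuum_Not_Denumerable"
begin

lemma exists_transc:
  "\<exists>x::real. \<forall>n (c::nat\<Rightarrow>int). (\<Sum>i\<le>n. real_of_int (c i) * x^i) = 0 \<longrightarrow> (\<forall>i\<le>n. c i = 0)"
proof -
  define I where "I = {(n::nat, ws::int list). \<exists>i\<le>n. ws!i \<noteq> 0}"
  define Bad where "Bad = (\<Union>p\<in>I. {x::real. (\<Sum>i\<le>fst p. real_of_int (snd p ! i) * x^i) = 0})"
  have "countable Bad" unfolding Bad_def
  proof (rule countable_UN)
    show "countable I" by (rule countable_subset[OF subset_UNIV]) simp
    fix p assume "p \<in> I"
    then obtain i where "i \<le> fst p" "snd p ! i \<noteq> 0" unfolding I_def by auto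
    then have "finite {x::real. (\<Sum>i\<le>fst p. real_of_int (snd p ! i) * x^i) = 0}"
      by (intro polyfun_roots_finite[of "\<lambda>i. real_of_int (snd p ! i)" i]) auto
    then show "countable {x::real. (\<Sum>i\<le>fst p. real_of_int (snd p ! i) * x^i) = 0}"
      by (rule countable_finite)
  qed
  then have "Bad \<noteq> UNIV" using uncountable_UNIV_real by auto
  then obtain x where x: "x \<notin> Bad" by auto
  show ?thesis
  proof (intro exI allI impI)
    fix n c i assume s: "(\<Sum>i\<le>n. real_of_int (c i) * x^i) = 0" and "i \<le> n"
    show "c i = 0"
    proof (rule ccontr)
      assume "c i \<noteq> 0"
      define ws where "ws = map c [0..<Suc n]"
      have ws: "\<And>j. j \<le> n \<Longrightarrow> ws ! j = c j" unfolding ws_def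
        by (simp add: nth_map_upt less_Suc_eq_le del: upt_Suc)
      have "(n, ws) \<in> I" unfolding I_def using \<open>i\<le>n\<close> \<open>c i \<noteq> 0\<close> ws by auto
      moreover have "(\<Sum>i\<le>n. real_of_int (ws ! i) * x^i) = 0" using s ws by simp
      ultimately have "x \<in> Bad" unfolding Bad_def by force
      with x show False by simp
    qed
  qed
qed

lemma pw_seq:
  fixes f :: "real \<Rightarrow> real" and B :: "real set"
  assumes "finite B"
    and H: "\<And>x y. 0 \<le> x \<Longrightarrow> x \<le> y \<Longrightarrow> y < 1 \<Longrightarrow> (\<forall>b\<in>B. \<not>(x < b \<and> b \<le> y)) \<Longrightarrow> f y - y = f x - x"
  shows "\<exists>(a::nat \<Rightarrow> real) n. a 0 = 0 \<and> a n = 1 \<and> (\<forall>i<n. a i < a (Suc i))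
                 \<and> (\<forall>i<n. \<exists>c. \<forall>x\<in>{a i..<a (Suc i)}. f x = x + c)"
proof -
  define S where "S = insert 0 (insert 1 (B \<inter> {0<..<1::real}))"
  have finS: "finite S" unfolding S_def using assms(1) by auto
  define L where "L = sorted_list_of_set S"
  have setL: "set L = S" unfolding L_def using finS by simp
  have sL: "sorted_wrt (<) L" unfolding L_def by simp
  have Sb: "\<And>s. s \<in> S \<Longrightarrow> 0 \<le> s \<and> s \<le> 1" unfolding S_def by auto
  have lt: "\<And>i j. i < j \<Longrightarrow> j < length L \<Longrightarrow> L!i < L!j" using sL sorted_wrt_nth_less by blast
  have le: "\<And>i j. i \<le> j \<Longrightarrow> j < length L \<Longrightarrow> L!i \<le> L!j"
    using lt by (metis le_less order.refl)
  have "0 \<in> set L" using setL S_def by auto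
  then obtain j0 where j0: "j0 < length L" "L!j0 = 0" by (auto simp: in_set_conv_nth)
  have "1 \<in> set L" using setL S_def by auto
  then obtain j1 where j1: "j1 < length L" "L!j1 = 1" by (auto simp: in_set_conv_nth)
  have nth_in: "\<And>i. i < length L \<Longrightarrow> L!i \<in> S" using setL nth_mem by blast
  have L0: "L!0 = 0"
  proof -
    have "0 < length L" using j0(1) by linarith
    then have "L!0 \<in> S" using nth_in by blast
    then have "L!0 \<ge> 0" using Sb by auto
    moreover have "L!0 \<le> L!j0" using le[of 0 j0] j0 by simp
    ultimately show ?thesis using j0 by simp
  qed
  define N where "N = length L - 1"
  have NL: "N < length L" unfolding N_def using j0 by simp
  have LN: "L!N = 1"
  proof -
    have "L!N \<le> 1" using nth_in[OF NL] Sb by auto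
    moreover have "L!j1 \<le> L!N" using le[of j1 N] j1 NL unfolding N_def by simp
    ultimately show ?thesis using j1 by simp
  qed
  show ?thesis
  proof (intro exI[of _ "\<lambda>i. L!i"] exI[of _ N] conjI allI impI)
    show "L!0 = 0" by (rule L0)
    show "L!N = 1" by (rule LN)
    fix i assume i: "i < N"
    show "L!i < L!(Suc i)" using lt[of i "Suc i"] i NL by simp
  next
    fix i assume i: "i < N"
    show "\<exists>c. \<forall>x\<in>{L!i..<L!(Suc i)}. f x = x + c"
    proof (intro exI ballI)
      fix x assume x: "x \<in> {L!i..<L!(Suc i)}"
      have Li0: "0 \<le> L!i" using nth_in[of i] i NL Sb by auto
      have "L!(Suc i) \<le> 1" using nth_in[of "Suc i"] i NL Sb by auto
      with x have x1: "x < 1" by simp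
      have "\<forall>b\<in>B. \<not>(L!i < b \<and> b \<le> x)"
      proof (intro ballI notI)
        fix b assume b: "b \<in> B" "L!i < b \<and> b \<le> x"
        then have "b \<in> S" unfolding S_def using Li0 x1 by auto
        then obtain j where j: "j < length L" "L!j = b" using setL by (auto simp: in_set_conv_nth)
        have "i < j" using b j le[of j i] i NL by (metis not_le less_imp_le_nat le_less_trans less_le_not_le N_def)
        then have "Suc i \<le> j" by simp
        then have "L!(Suc i) \<le> b" using le[of "Suc i" j] j by simp
        then show False using b x by simp
      qed
      then have "f x - x = f (L!i) - L!i" using H[of "L!i" x] Li0 x x1 by simp
      then show "f x = x + (f (L!i) - L!i)" by simp
    qed
  qed
qed



locale IETW = comm_group A for A :: "('a, 'b) monoid_scheme" (structure) +
  fixes d n :: nat and e :: "nat \<Rightarrow> 'a" and \<alpha> :: "nat \<Rightarrow> real" and \<beta> :: real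
  assumes e_bij: "bij_betw e {..<n} (carrier A)"
  and \<beta>0: "0 < \<beta>" and \<beta>1: "\<beta> < 1"
  and indep: "\<And>(m::int) (v::nat\<Rightarrow>int) (k::int). real_of_int m + (\<Sum>i<d. real_of_int (v i) * \<alpha> i) + real_of_int k * \<beta> = 0
       \<Longrightarrow> (\<forall>i<d. v i = 0) \<and> k = 0"
begin

definition dot :: "(nat \<Rightarrow> int) \<Rightarrow> real" where
  "dot z = (\<Sum>i<d. real_of_int (z i) * \<alpha> i)"

definition ind :: "(nat \<Rightarrow> int) \<Rightarrow> real \<Rightarrow> bool" where
  "ind g s \<longleftrightarrow> frac (s - dot g) < \<beta>"

definition good :: "((nat \<Rightarrow> int) \<Rightarrow> 'a) \<Rightarrow> bool" where
  "good f \<longleftrightarrow> (\<forall>g. f g \<in> carrier A) \<and> finite {g. f g \<noteq> \<one>}"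

definition FF :: "((nat \<Rightarrow> int) \<Rightarrow> 'a) \<Rightarrow> real \<Rightarrow> 'a" where
  "FF f s = finprod A (\<lambda>g. if ind g s then f g else \<one>) {g. f g \<noteq> \<one>}"

definition idx :: "'a \<Rightarrow> nat" where
  "idx a = the_inv_into {..<n} e a"

definition phi :: "((nat \<Rightarrow> int) \<Rightarrow> 'a) \<times> (nat \<Rightarrow> int) \<Rightarrow> real \<Rightarrow> real" where
  "phi p x = (if 0 \<le> x \<and> x < 1 then
     (let k = nat \<lfloor>real n * x\<rfloor>; s = real n * x - real_of_int \<lfloor>real n * x\<rfloor> + dot (snd p)
      in (real (idx (FF (fst p) s \<otimes> e k)) + frac s) / real n) else x)"

lemma n_pos: "0 < n"
proof -
  have "\<one> \<in> e ` {..<n}" using e_bij one_closed by (simp add: bij_betw_def)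
  show ?thesis
  proof (rule ccontr)
    assume "\<not> 0 < n"
    then have "{..<n} = {}" by simp
    with \<open>\<one> \<in> e ` {..<n}\<close> show False by simp
  qed
qed

lemma e_carr: "k < n \<Longrightarrow> e k \<in> carrier A"
  using e_bij by (auto simp: bij_betw_def)

lemma idx: "a \<in> carrier A \<Longrightarrow> idx a < n \<and> e (idx a) = a"
proof -
  assume a: "a \<in> carrier A"
  have inj: "inj_on e {..<n}" and im: "e ` {..<n} = carrier A" using e_bij by (auto simp: bij_betw_def)
  have "the_inv_into {..<n} e a \<in> {..<n}" by (rule the_inv_into_into[OF inj]) (use a im in auto)
  moreover have "e (the_inv_into {..<n} e a) = a" by (rule f_the_inv_into_f[OF inj]) (use a im in auto)
  ultimately show ?thesis unfolding idx_def by simp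
qed

lemma idx_e: "k < n \<Longrightarrow> idx (e k) = k"
  unfolding idx_def using e_bij by (simp add: bij_betw_def the_inv_into_f_f)

lemma code_range: "k < n \<Longrightarrow> 0 \<le> t \<Longrightarrow> t < 1 \<Longrightarrow> 0 \<le> (real k + t) / real n \<and> (real k + t) / real n < 1"
proof -
  assume a: "k < n" "0 \<le> t" "t < 1"
  then have "Suc k \<le> n" by (simp only: Suc_le_eq)
  then have "real (Suc k) \<le> real n" by (simp only: of_nat_le_iff)
  then have "real k + t < real n" using a by simp
  then show ?thesis using a n_pos by (simp add: divide_simps)
qed

lemma decode:
  assumes "k < n" "0 \<le> t" "t < 1"
  shows "nat \<lfloor>real n * ((real k + t) / real n)\<rfloor> = k"
    and "real n * ((real k + t) / real n) - real_of_int \<lfloor>real n * ((real k + t) / real n)\<rfloor> = t"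
proof -
  have eq: "real n * ((real k + t) / real n) = real k + t" using n_pos by simp
  have fl: "\<lfloor>real k + t\<rfloor> = int k" using assms by (simp add: floor_eq_iff)
  show "nat \<lfloor>real n * ((real k + t) / real n)\<rfloor> = k" using eq fl by simp
  show "real n * ((real k + t) / real n) - real_of_int \<lfloor>real n * ((real k + t) / real n)\<rfloor> = t"
    using eq fl by simp
qed

lemma x_cases:
  assumes "0 \<le> x" "x < 1"
  obtains k t where "k < n" "0 \<le> t" "t < 1" "x = (real k + t) / real n"
proof -
  define k where "k = nat \<lfloor>real n * x\<rfloor>"
  define t where "t = real n * x - real_of_int \<lfloor>real n * x\<rfloor>"
  have f0: "0 \<le> \<lfloor>real n * x\<rfloor>" using assms by simp
  have "real n * x < real n" using assms n_pos by simp
  then have "\<lfloor>real n * x\<rfloor> < int n" by (simp add: floor_less_iff)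
  then have "k < n" unfolding k_def using f0 by linarith
  moreover have "0 \<le> t" "t < 1" unfolding t_def by linarith+
  moreover have "x = (real k + t) / real n" unfolding k_def t_def using f0 n_pos by simp
  ultimately show ?thesis using that by blast
qed

lemma code_inj:
  assumes "0 \<le> t" "t < 1" "0 \<le> t'" "t' < 1" "(real k + t) / real n = (real k' + t') / real n"
  shows "k = k' \<and> t = t'"
proof -
  have eq: "real k + t = real k' + t'" using assms n_pos by (simp add: divide_simps)
  have "\<lfloor>real k + t\<rfloor> = int k" "\<lfloor>real k' + t'\<rfloor> = int k'" using assms by (simp_all add: floor_eq_iff)
  then have "k = k'" using eq by simp
  then show ?thesis using eq by simp
qed

lemma good_FF: "good f \<Longrightarrow> FF f s \<in> carrier A"
  unfolding FF_def good_def by (intro finprod_closed) auto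

lemma phi_eval:
  assumes "k < n" "0 \<le> t" "t < 1"
  shows "phi (f, z) ((real k + t) / real n) = (real (idx (FF f (t + dot z) \<otimes> e k)) + frac (t + dot z)) / real n"
  using code_range[OF assms] decode[OF assms] unfolding phi_def by (simp add: Let_def)

lemma phi_out: assumes "\<not> (0 \<le> x \<and> x < 1)" shows "phi p x = x"
  unfolding phi_def by (simp only: if_not_P[OF assms])

lemma phi_eval_idx:
  assumes "good f" "k < n" "0 \<le> t" "t < 1"
  shows "idx (FF f (t + dot z) \<otimes> e k) < n"
  using idx good_FF assms e_carr by blast

lemma phi_range:
  assumes "good f" "0 \<le> x" "x < 1"
  shows "0 \<le> phi (f, z) x \<and> phi (f, z) x < 1"
proof -
  obtain k t where kt: "k < n" "0 \<le> t" "t < 1" "x = (real k + t) / real n" using x_cases assms by blast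
  show ?thesis using phi_eval[OF kt(1-3)] code_range[OF phi_eval_idx[OF assms(1) kt(1-3), of z] frac_ge_0 frac_lt_1]
    kt(4) by simp
qed

lemma ind_period: "ind g (s + real_of_int m) = ind g s"
proof -
  have "frac (s + real_of_int m - dot g) = frac ((s - dot g) + real_of_int m)" by (simp add: algebra_simps)
  also have "\<dots> = frac (s - dot g)" by (rule frac_add_of_int_right)
  finally show ?thesis unfolding ind_def by simp
qed

lemma FF_period: "FF f (s + real_of_int m) = FF f s"
  by (simp only: FF_def ind_period)

lemma FF_frac: "FF f (frac s + c) = FF f (s + c)"
proof -
  have eq: "frac s + c = (s + c) + real_of_int (- \<lfloor>s\<rfloor>)" by (simp add: frac_def)
  show ?thesis by (subst eq) (rule FF_period)
qed

lemma FF_super: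
  assumes "good f" "finite S" "{g. f g \<noteq> \<one>} \<subseteq> S"
  shows "FF f s = finprod A (\<lambda>g. if ind g s then f g else \<one>) S"
  unfolding FF_def
proof (rule finprod_mono_neutral_cong_left)
  show "finite S" by (rule assms(2))
  show "{g. f g \<noteq> \<one>} \<subseteq> S" by (rule assms(3))
  fix i assume "i \<in> S - {g. f g \<noteq> \<one>}"
  then show "(if ind i s then f i else \<one>) = \<one>" by simp
next
  fix x show "(if ind x s then f x else \<one>) = (if ind x s then f x else \<one>)" by (rule refl)
next
  show "(\<lambda>g. if ind g s then f g else \<one>) \<in> S \<rightarrow> carrier A"
    using assms(1) unfolding good_def by (simp add: Pi_iff)
qed

lemma dot_add: "dot (\<lambda>i. a i + b i) = dot a + dot b"
  unfolding dot_def by (simp add: sum.distrib distrib_right)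

lemma dot_diff: "dot (\<lambda>i. a i - b i) = dot a - dot b"
  unfolding dot_def by (simp add: sum_subtractf left_diff_distrib)

end


context IETW begin

lemma FF_cong:
  assumes "good f" "\<And>g. f g \<noteq> \<one> \<Longrightarrow> ind g s = ind g s'"
  shows "FF f s = FF f s'"
  unfolding FF_def
  by (rule finprod_cong') (use assms in \<open>auto simp: good_def Pi_iff\<close>)

lemma FF_mult:
  assumes gf: "good f" and gf': "good f'"
  shows "FF (\<lambda>g. f g \<otimes> f' (\<lambda>i. g i - z i)) s = FF f s \<otimes> FF f' (s - dot z)"
proof -
  define sh where "sh = (\<lambda>h::nat\<Rightarrow>int. \<lambda>i. h i + z i)"
  define us where "us = (\<lambda>h::nat\<Rightarrow>int. \<lambda>i. h i - z i)"
  have us_sh: "\<And>h. us (sh h) = h" unfolding us_def sh_def by simp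
  have sh_us: "\<And>h. sh (us h) = h" unfolding us_def sh_def by simp
  have inj: "inj_on sh X" for X by (metis inj_onI us_sh)
  have cf: "\<And>g. f g \<in> carrier A" and cf': "\<And>g. f' g \<in> carrier A"
    using gf gf' by (auto simp: good_def)
  define S where "S = {g. f g \<noteq> \<one>} \<union> sh ` {g. f' g \<noteq> \<one>}"
  have finS: "finite S" unfolding S_def using gf gf' by (auto simp: good_def)
  have supp: "{g. f g \<otimes> f' (us g) \<noteq> \<one>} \<subseteq> S"
  proof
    fix g assume "g \<in> {g. f g \<otimes> f' (us g) \<noteq> \<one>}"
    then have "f g \<noteq> \<one> \<or> f' (us g) \<noteq> \<one>" by auto
    then show "g \<in> S" unfolding S_def using sh_us by (metis (mono_tags, lifting) UnI1 UnI2 image_eqI mem_Collect_eq)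
  qed
  have good3: "good (\<lambda>g. f g \<otimes> f' (us g))"
    unfolding good_def using cf cf' finS supp finite_subset by auto
  have "FF (\<lambda>g. f g \<otimes> f' (us g)) s = finprod A (\<lambda>g. if ind g s then f g \<otimes> f' (us g) else \<one>) S"
    by (rule FF_super[OF good3 finS supp])
  also have "\<dots> = finprod A (\<lambda>g. (if ind g s then f g else \<one>) \<otimes> (if ind g s then f' (us g) else \<one>)) S"
    by (rule finprod_cong') (auto simp: cf cf' Pi_iff)
  also have "\<dots> = finprod A (\<lambda>g. if ind g s then f g else \<one>) S \<otimes> finprod A (\<lambda>g. if ind g s then f' (us g) else \<one>) S"
    by (rule finprod_multf) (auto simp: cf cf' Pi_iff)
  also have "finprod A (\<lambda>g. if ind g s then f g else \<one>) S = FF f s"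
    by (rule FF_super[symmetric, OF gf finS]) (auto simp: S_def)
  also have "finprod A (\<lambda>g. if ind g s then f' (us g) else \<one>) S = FF f' (s - dot z)"
  proof -
    have Seq: "S = sh ` (us ` S)" using sh_us by (auto simp: image_iff)
    have "finprod A (\<lambda>g. if ind g s then f' (us g) else \<one>) S
        = finprod A (\<lambda>g. if ind g s then f' (us g) else \<one>) (sh ` (us ` S))" using Seq by simp
    also have "\<dots> = finprod A (\<lambda>h. if ind (sh h) s then f' (us (sh h)) else \<one>) (us ` S)"
      by (rule finprod_reindex) (auto simp: cf' Pi_iff inj)
    also have "\<dots> = finprod A (\<lambda>h. if ind h (s - dot z) then f' h else \<one>) (us ` S)"
    proof (rule finprod_cong')
      fix h
      have eqh: "s - dot (sh h) = (s - dot z) - dot h" unfolding sh_def dot_add by simp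
      show "(if ind (sh h) s then f' (us (sh h)) else \<one>) = (if ind h (s - dot z) then f' h else \<one>)"
        by (simp only: ind_def us_sh eqh)
    qed (auto simp: cf' Pi_iff)
    also have "\<dots> = FF f' (s - dot z)"
    proof -
      have sub: "{g. f' g \<noteq> \<one>} \<subseteq> us ` S"
      proof
        fix h assume "h \<in> {g. f' g \<noteq> \<one>}"
        then have "sh h \<in> S" unfolding S_def by auto
        then show "h \<in> us ` S" using us_sh[of h] by (metis image_eqI)
      qed
      show ?thesis by (rule FF_super[symmetric, OF gf' _ sub]) (use finS in simp)
    qed
    finally show ?thesis .
  qed
  finally show ?thesis unfolding us_def .
qed

lemma FF_one: "FF (\<lambda>g. \<one>) s = \<one>"
  unfolding FF_def by simp

lemma phi_comp:
  assumes gf: "good f" and gf': "good f'"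
  shows "phi (f, z) (phi (f', z') x) = phi (\<lambda>g. f g \<otimes> f' (\<lambda>i. g i - z i), \<lambda>i. z i + z' i) x"
proof (cases "0 \<le> x \<and> x < 1")
  case False
  then show ?thesis by (simp add: phi_out)
next
  case True
  then obtain k t where kt: "k < n" "0 \<le> t" "t < 1" "x = (real k + t) / real n" using x_cases by blast
  define s1 where "s1 = t + dot z'"
  define k1 where "k1 = idx (FF f' s1 \<otimes> e k)"
  have k1: "k1 < n" "e k1 = FF f' s1 \<otimes> e k" unfolding k1_def using idx good_FF[OF gf'] e_carr kt(1) by blast+
  have inner: "phi (f', z') x = (real k1 + frac s1) / real n"
    using phi_eval[OF kt(1-3)] kt(4) unfolding k1_def s1_def by simp
  have "phi (f, z) (phi (f', z') x) = (real (idx (FF f (frac s1 + dot z) \<otimes> e k1)) + frac (frac s1 + dot z)) / real n"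
    unfolding inner by (rule phi_eval[OF k1(1) frac_ge_0 frac_lt_1])
  also have "\<dots> = (real (idx (FF f (s1 + dot z) \<otimes> (FF f' s1 \<otimes> e k))) + frac (s1 + dot z)) / real n"
    unfolding FF_frac k1(2) by simp
  also have "\<dots> = phi (\<lambda>g. f g \<otimes> f' (\<lambda>i. g i - z i), \<lambda>i. z i + z' i) x"
  proof -
    have e1: "t + dot (\<lambda>i. z i + z' i) = s1 + dot z" unfolding dot_add s1_def by simp
    have e2: "t + dot (\<lambda>i. z i + z' i) - dot z = s1" unfolding dot_add s1_def by simp
    show ?thesis unfolding kt(4) phi_eval[OF kt(1-3)] FF_mult[OF gf gf'] e1 e2
      using good_FF[OF gf] good_FF[OF gf'] e_carr[OF kt(1)] by (simp add: m_assoc)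
  qed
  finally show ?thesis .
qed

lemma phi_one: "phi (\<lambda>g. \<one>, \<lambda>i. 0) x = x"
proof (cases "0 \<le> x \<and> x < 1")
  case False
  then show ?thesis by (simp add: phi_out)
next
  case True
  then obtain k t where kt: "k < n" "0 \<le> t" "t < 1" "x = (real k + t) / real n" using x_cases by blast
  have "dot (\<lambda>i. 0) = 0" unfolding dot_def by simp
  then show ?thesis unfolding kt(4) phi_eval[OF kt(1-3)] FF_one using kt e_carr idx_e by simp
qed

end


lemma floor_same:
  fixes tx ty w :: real
  assumes "0 \<le> tx" "tx \<le> ty" "ty < 1" "\<not> (tx < frac w \<and> frac w \<le> ty)"
  shows "\<lfloor>tx - w\<rfloor> = \<lfloor>ty - w\<rfloor>"
proof (rule ccontr)
  assume ne: "\<lfloor>tx - w\<rfloor> \<noteq> \<lfloor>ty - w\<rfloor>"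
  have "\<lfloor>tx - w\<rfloor> \<le> \<lfloor>ty - w\<rfloor>" by (rule floor_mono) (use assms in simp)
  with ne have lt: "\<lfloor>tx - w\<rfloor> < \<lfloor>ty - w\<rfloor>" by simp
  define m where "m = \<lfloor>ty - w\<rfloor>"
  have m1: "tx - w < of_int m" using lt unfolding m_def by (simp only: floor_less_iff)
  have m2: "of_int m \<le> ty - w" unfolding m_def by (rule of_int_floor_le)
  define p where "p = of_int m + w"
  have "0 \<le> p" "p < 1" using m1 m2 assms unfolding p_def by simp_all
  then have "frac p = p" using frac_eq by blast
  moreover have "frac p = frac w" unfolding p_def by simp
  ultimately have "frac w = p" by simp
  then show False using m1 m2 assms(4) unfolding p_def by simp
qed

lemma ind_floor_aux: "frac (u::real) < b \<longleftrightarrow> \<lfloor>u - b\<rfloor> < \<lfloor>u\<rfloor>"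
  by (simp add: frac_def floor_less_iff) linarith

context IETW begin

lemma carrier_W:
  assumes "(f, z) \<in> carrier (wreath_prod A d)"
  shows "good f" "z \<in> Zd d" "\<And>g. g \<notin> Zd d \<Longrightarrow> f g = \<one>"
proof -
  have a: "z \<in> Zd d" "\<forall>g\<in>Zd d. f g \<in> carrier A" "\<forall>g. g \<notin> Zd d \<longrightarrow> f g = \<one>" "finite {g. f g \<noteq> \<one>}"
    using assms by (auto simp: wreath_prod_def)
  show "good f" unfolding good_def using a by (metis one_closed)
  show "z \<in> Zd d" by (rule a(1))
  show "\<And>g. g \<notin> Zd d \<Longrightarrow> f g = \<one>" using a(3) by blast
qed

lemma mult_W: "(f, z) \<otimes>\<^bsub>wreath_prod A d\<^esub> (f', z') = (\<lambda>g. f g \<otimes> f' (\<lambda>i. g i - z i), \<lambda>i. z i + z' i)"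
  by (simp add: wreath_prod_def)

lemma phi_bij:
  assumes "(f, z) \<in> carrier (wreath_prod A d)"
  shows "bij_betw (phi (f, z)) {0..<1} {0..<1}"
proof -
  have gf: "good f" using carrier_W[OF assms] by simp
  then have cf: "\<And>g. f g \<in> carrier A" unfolding good_def by simp
  define f2 where "f2 = (\<lambda>g. inv (f (\<lambda>i. g i + z i)))"
  define z2 where "z2 = (\<lambda>i. - z i)"
  have sub: "{g. f2 g \<noteq> \<one>} \<subseteq> (\<lambda>h. \<lambda>i. h i - z i) ` {g. f g \<noteq> \<one>}"
  proof
    fix g assume "g \<in> {g. f2 g \<noteq> \<one>}"
    then have "f (\<lambda>i. g i + z i) \<noteq> \<one>" unfolding f2_def by auto
    moreover have "g = (\<lambda>i. (\<lambda>i. g i + z i) i - z i)" by simp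
    ultimately show "g \<in> (\<lambda>h. \<lambda>i. h i - z i) ` {g. f g \<noteq> \<one>}"
      by (intro image_eqI[where x="\<lambda>i. g i + z i"]) simp_all
  qed
  have gf2: "good f2" unfolding good_def
    using sub gf cf unfolding good_def f2_def by (auto intro: finite_subset)
  have c1: "phi (f, z) (phi (f2, z2) x) = x" for x
  proof -
    have "(\<lambda>g. f g \<otimes> f2 (\<lambda>i. g i - z i)) = (\<lambda>g. \<one>)"
      unfolding f2_def by (simp add: cf)
    moreover have "(\<lambda>i. z i + z2 i) = (\<lambda>i. 0)" unfolding z2_def by simp
    ultimately show ?thesis unfolding phi_comp[OF gf gf2] by (simp add: phi_one)
  qed
  have c2: "phi (f2, z2) (phi (f, z) x) = x" for x
  proof -
    have "(\<lambda>g. f2 g \<otimes> f (\<lambda>i. g i - z2 i)) = (\<lambda>g. \<one>)"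
      unfolding f2_def z2_def by (simp add: cf)
    moreover have "(\<lambda>i. z2 i + z i) = (\<lambda>i. 0)" unfolding z2_def by simp
    ultimately show ?thesis unfolding phi_comp[OF gf2 gf] by (simp add: phi_one)
  qed
  show ?thesis
    by (rule bij_betw_byWitness[where f' = "phi (f2, z2)"])
      (use c1 c2 phi_range[OF gf] phi_range[OF gf2] in auto)
qed

lemma phi_pw:
  assumes gf: "good f"
  shows "\<exists>B. finite B \<and> (\<forall>x y. 0 \<le> x \<longrightarrow> x \<le> y \<longrightarrow> y < 1 \<longrightarrow> (\<forall>b\<in>B. \<not> (x < b \<and> b \<le> y))
              \<longrightarrow> phi (f, z) y - y = phi (f, z) x - x)"
proof -
  define c where "c = dot z"
  define S where "S = {g. f g \<noteq> \<one>}"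
  have finS: "finite S" using gf unfolding good_def S_def by simp
  define W where "W = insert (- c) ((\<lambda>g. dot g - c) ` S \<union> (\<lambda>g. dot g + \<beta> - c) ` S)"
  define B where "B = (\<lambda>k. real k / real n) ` {..<n} \<union> (\<lambda>p. (real (fst p) + frac (snd p)) / real n) ` ({..<n} \<times> W)"
  have finB: "finite B" unfolding B_def W_def using finS by simp
  have np: "0 < real n" using n_pos by simp
  show ?thesis
  proof (intro exI conjI allI impI)
    show "finite B" by (rule finB)
    fix x y assume x0: "0 \<le> x" and xy: "x \<le> y" and y1: "y < 1" and nb: "\<forall>b\<in>B. \<not> (x < b \<and> b \<le> y)"
    have x1: "x < 1" using xy y1 by simp
    have y0: "0 \<le> y" using xy x0 by simp
    obtain kx tx where kx: "kx < n" "0 \<le> tx" "tx < 1" "x = (real kx + tx) / real n"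
      using x_cases[OF x0 x1] by blast
    obtain ky ty where ky: "ky < n" "0 \<le> ty" "ty < 1" "y = (real ky + ty) / real n"
      using x_cases[OF y0 y1] by blast
    have X: "x * real n = real kx + tx" using kx np by simp
    have Y: "y * real n = real ky + ty" using ky np by simp
    have XY: "x * real n \<le> y * real n" using xy np by (simp add: mult_right_mono)
    have inB: "\<And>v. v / real n \<in> B \<Longrightarrow> \<not> (x * real n < v \<and> v \<le> y * real n)"
      using nb np by (auto simp: pos_less_divide_eq pos_divide_le_eq)
    have kk: "kx = ky"
    proof (rule ccontr)
      assume "kx \<noteq> ky"
      then consider "kx < ky" | "ky < kx" by linarith
      then show False
      proof cases
        case 1
        then have "real kx + 1 \<le> real ky" by simp
        moreover have "real ky / real n \<in> B" unfolding B_def using ky(1) by auto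
        ultimately show False using inB[of "real ky"] X Y kx ky by linarith
      next
        case 2
        then have "real ky + 1 \<le> real kx" by simp
        then show False using X Y XY kx ky by linarith
      qed
    qed
    define k where "k = kx"
    have txy: "tx \<le> ty" using X Y XY kk by simp
    have fl: "\<lfloor>tx - w\<rfloor> = \<lfloor>ty - w\<rfloor>" if w: "w \<in> W" for w
    proof (rule floor_same[OF kx(2) txy ky(3)])
      have "(real k + frac w) / real n \<in> B" unfolding B_def using w kx(1) k_def
        by (auto intro!: image_eqI[where x = "(k, w)"])
      then show "\<not> (tx < frac w \<and> frac w \<le> ty)" using inB[of "real k + frac w"] X Y kk k_def by simp
    qed
    have h1: "\<lfloor>tx + c\<rfloor> = \<lfloor>ty + c\<rfloor>" using fl[of "- c"] unfolding W_def by simp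
    have indt: "ind g (t + c) \<longleftrightarrow> \<lfloor>t - (dot g + \<beta> - c)\<rfloor> < \<lfloor>t - (dot g - c)\<rfloor>" for g t
    proof -
      have e1: "t + c - dot g = t - (dot g - c)" by simp
      have e2: "t - (dot g - c) - \<beta> = t - (dot g + \<beta> - c)" by simp
      show ?thesis unfolding ind_def ind_floor_aux e1 e2 ..
    qed
    have h2: "FF f (tx + c) = FF f (ty + c)"
    proof (rule FF_cong[OF gf])
      fix g assume "f g \<noteq> \<one>"
      then have "g \<in> S" unfolding S_def by simp
      then have "dot g - c \<in> W" "dot g + \<beta> - c \<in> W" unfolding W_def by auto
      then show "ind g (tx + c) = ind g (ty + c)" unfolding indt using fl by simp
    qed
    define I where "I = idx (FF f (ty + c) \<otimes> e k)"
    have py0: "phi (f, z) y = (real (idx (FF f (ty + dot z) \<otimes> e ky)) + frac (ty + dot z)) / real n"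
      unfolding ky(4) by (rule phi_eval[OF ky(1-3)])
    have py: "phi (f, z) y = (real I + frac (ty + c)) / real n"
      unfolding I_def c_def k_def kk by (rule py0)
    have px0: "phi (f, z) x = (real (idx (FF f (tx + dot z) \<otimes> e kx)) + frac (tx + dot z)) / real n"
      unfolding kx(4) by (rule phi_eval[OF kx(1-3)])
    have px: "phi (f, z) x = (real I + frac (tx + c)) / real n"
      using px0 h2 unfolding I_def c_def k_def by simp
    have "phi (f, z) y - y = ((real I + frac (ty + c)) - (real k + ty)) / real n"
      unfolding py unfolding ky(4) kk[symmetric] k_def by (simp add: diff_divide_distrib)
    also have "\<dots> = ((real I + frac (tx + c)) - (real k + tx)) / real n"
      using h1 unfolding frac_def by simp
    also have "\<dots> = phi (f, z) x - x"
      unfolding px unfolding kx(4) k_def by (simp add: diff_divide_distrib)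
    finally show "phi (f, z) y - y = phi (f, z) x - x" .
  qed
qed

lemma phi_IET:
  assumes "(f, z) \<in> carrier (wreath_prod A d)"
  shows "phi (f, z) \<in> IET"
proof -
  have gf: "good f" using carrier_W[OF assms] by simp
  obtain B where B: "finite B" "\<And>x y. 0 \<le> x \<Longrightarrow> x \<le> y \<Longrightarrow> y < 1 \<Longrightarrow> (\<forall>b\<in>B. \<not> (x < b \<and> b \<le> y))
              \<Longrightarrow> phi (f, z) y - y = phi (f, z) x - x"
    using phi_pw[OF gf, of z] by blast
  have pw: "\<exists>(a::nat \<Rightarrow> real) n. a 0 = 0 \<and> a n = 1 \<and> (\<forall>i<n. a i < a (Suc i))
                 \<and> (\<forall>i<n. \<exists>c. \<forall>x\<in>{a i..<a (Suc i)}. phi (f, z) x = x + c)"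
  proof (rule pw_seq[where B=B])
    show "finite B" by (rule B(1))
    fix x y assume "0 \<le> x" "x \<le> y" "y < 1" "\<forall>b\<in>B. \<not> (x < b \<and> b \<le> y)"
    then show "phi (f, z) y - y = phi (f, z) x - x" by (rule B(2))
  qed
  have out: "\<forall>x. x \<notin> {0..<1} \<longrightarrow> phi (f, z) x = x" using phi_out by simp
  show ?thesis unfolding IET_def mem_Collect_eq
    using phi_bij[OF assms] pw out by blast
qed

end


context IETW begin

lemma FF_determines:
  assumes gf: "good f" and gf': "good f'"
    and sf: "\<And>h. f h \<noteq> \<one> \<Longrightarrow> h \<in> Zd d" and sf': "\<And>h. f' h \<noteq> \<one> \<Longrightarrow> h \<in> Zd d"
    and g: "g \<in> Zd d" and eq: "\<And>s. FF f s = FF f' s"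
  shows "f g = f' g"
proof -
  have cf: "\<And>h. f h \<in> carrier A" using gf unfolding good_def by simp
  have cf': "\<And>h. f' h \<in> carrier A" using gf' unfolding good_def by simp
  define T where "T = ({h. f h \<noteq> \<one>} \<union> {h. f' h \<noteq> \<one>}) - {g}"
  have finT: "finite T" unfolding T_def using gf gf' unfolding good_def by simp
  have gT: "g \<notin> T" unfolding T_def by simp
  have TZ: "\<And>h. h \<in> T \<Longrightarrow> h \<in> Zd d \<and> h \<noteq> g" unfolding T_def using sf sf' by auto
  define R where "R = (\<lambda>F s. finprod A (\<lambda>h. if ind h s then F h else \<one>) T)"
  have dec: "FF F s = (if ind g s then F g else \<one>) \<otimes> R F s"
    if gF: "good F" and supF: "{h. F h \<noteq> \<one>} \<subseteq> insert g T" for F s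
  proof -
    have cF: "\<And>h. F h \<in> carrier A" using gF unfolding good_def by simp
    have "FF F s = finprod A (\<lambda>h. if ind h s then F h else \<one>) (insert g T)"
      by (rule FF_super[OF gF _ supF]) (use finT in simp)
    also have "\<dots> = (if ind g s then F g else \<one>) \<otimes> R F s"
      unfolding R_def by (rule finprod_insert[OF finT gT]) (auto simp: cF Pi_iff)
    finally show ?thesis .
  qed
  have dec1: "FF f s = (if ind g s then f g else \<one>) \<otimes> R f s" for s
    by (rule dec[OF gf]) (auto simp: T_def)
  have dec2: "FF f' s = (if ind g s then f' g else \<one>) \<otimes> R f' s" for s
    by (rule dec[OF gf']) (auto simp: T_def)
  define p where "p = dot g"
  define u where "u = (\<lambda>h. frac (p - dot h))"
  have dgh: "p - dot h = dot (\<lambda>i. g i - h i)" for h unfolding p_def dot_diff ..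
  have u0: "0 < u h" if h: "h \<in> T" for h
  proof (rule ccontr)
    assume "\<not> 0 < u h"
    then have "frac (p - dot h) = 0" unfolding u_def using frac_ge_0[of "p - dot h"] by linarith
    then have "p - dot h \<in> \<int>" by simp
    then obtain m where m: "p - dot h = of_int m" by (elim Ints_cases)
    have "real_of_int (- m) + (\<Sum>i<d. real_of_int (g i - h i) * \<alpha> i) + real_of_int 0 * \<beta> = 0"
      using m dgh[of h] unfolding dot_def by simp
    then have "\<forall>i<d. g i - h i = 0" using indep[of "- m" "\<lambda>i. g i - h i" 0] by simp
    moreover have "\<forall>i\<ge>d. g i = 0 \<and> h i = 0" using g TZ[OF h] unfolding Zd_def by simp
    ultimately have "g = h" by (metis eq_iff_diff_eq_0 not_le ext)
    then show False using TZ[OF h] by simp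
  qed
  have uB: "u h \<noteq> \<beta>" if h: "h \<in> T" for h
  proof
    assume "u h = \<beta>"
    then have "p - dot h - \<beta> \<in> \<int>" unfolding u_def using frac_unique_iff by blast
    then obtain m where m: "p - dot h - \<beta> = of_int m" by (elim Ints_cases)
    have "real_of_int (- m) + (\<Sum>i<d. real_of_int (g i - h i) * \<alpha> i) + real_of_int (- 1) * \<beta> = 0"
      using m dgh[of h] unfolding dot_def by simp
    then have "(- 1::int) = 0" using indep[of "- m" "\<lambda>i. g i - h i" "- 1"] by simp
    then show False by simp
  qed
  define E where "E = insert (1 - \<beta>) (u ` T \<union> (\<lambda>h. \<bar>u h - \<beta>\<bar>) ` T)"
  have finE: "finite E" unfolding E_def using finT by simp
  have Epos: "\<forall>a\<in>E. 0 < a" unfolding E_def using u0 uB \<beta>1 by auto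
  define \<epsilon> where "\<epsilon> = Min E / 2"
  have Mpos: "0 < Min E" using finE Epos by (simp add: Min_gr_iff E_def)
  have eps0: "0 < \<epsilon>" unfolding \<epsilon>_def using Mpos by simp
  have epsE: "\<epsilon> < a" if a: "a \<in> E" for a
  proof -
    have "Min E \<le> a" by (rule Min_le[OF finE a])
    then show ?thesis unfolding \<epsilon>_def using Mpos by linarith
  qed
  have eps1: "\<epsilon> < 1 - \<beta>" using epsE unfolding E_def by simp
  have indgp: "ind g p" unfolding ind_def p_def using \<beta>0 by simp
  have indge: "\<not> ind g (p - \<epsilon>)"
  proof -
    have "frac (p - \<epsilon> - dot g) = 1 - \<epsilon>"
    proof (subst frac_unique_iff, intro conjI)
      have "p - \<epsilon> - dot g - (1 - \<epsilon>) = of_int (- 1)" unfolding p_def by simp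
      then show "p - \<epsilon> - dot g - (1 - \<epsilon>) \<in> \<int>" by (metis Ints_of_int)
      show "0 \<le> 1 - \<epsilon>" "1 - \<epsilon> < 1" using eps0 eps1 \<beta>0 by simp_all
    qed
    then show ?thesis unfolding ind_def using eps1 by simp
  qed
  have indh: "ind h (p - \<epsilon>) = ind h p" if h: "h \<in> T" for h
  proof -
    have "\<epsilon> < u h" "\<epsilon> < \<bar>u h - \<beta>\<bar>" using epsE h unfolding E_def by auto
    have fe: "frac (p - \<epsilon> - dot h) = u h - \<epsilon>"
    proof (subst frac_unique_iff, intro conjI)
      have "p - \<epsilon> - dot h - (u h - \<epsilon>) = of_int \<lfloor>p - dot h\<rfloor>" unfolding u_def frac_def by simp
      then show "p - \<epsilon> - dot h - (u h - \<epsilon>) \<in> \<int>" by (metis Ints_of_int)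
      show "0 \<le> u h - \<epsilon>" using \<open>\<epsilon> < u h\<close> by simp
      show "u h - \<epsilon> < 1" using eps0 frac_lt_1 unfolding u_def by (smt (verit))
    qed
    have "u h - \<epsilon> < \<beta> \<longleftrightarrow> u h < \<beta>" using \<open>\<epsilon> < \<bar>u h - \<beta>\<bar>\<close> eps0 unfolding abs_if by (auto split: if_splits)
    then show ?thesis unfolding ind_def fe unfolding u_def by simp
  qed
  have Req: "R F (p - \<epsilon>) = R F p" if cF: "\<And>h. F h \<in> carrier A" for F
    unfolding R_def by (rule finprod_cong') (use indh cF in \<open>auto simp: Pi_iff\<close>)
  have cR: "R F s \<in> carrier A" if cF: "\<And>h. F h \<in> carrier A" for F s
    unfolding R_def by (rule finprod_closed) (use cF in \<open>auto simp: Pi_iff\<close>)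
  have "R f p = R f' p"
    using eq[of "p - \<epsilon>"] unfolding dec1 dec2 using indge Req[OF cf] Req[OF cf'] cR[OF cf] cR[OF cf'] by simp
  moreover have "f g \<otimes> R f p = f' g \<otimes> R f' p"
    using eq[of p] unfolding dec1 dec2 using indgp by simp
  ultimately have "f g \<otimes> R f' p = f' g \<otimes> R f' p" by simp
  then show ?thesis using right_cancel[OF cR[OF cf'] cf[of g] cf'[of g]] by simp
qed

lemma phi_inj:
  assumes p: "(f, z) \<in> carrier (wreath_prod A d)" and q: "(f', z') \<in> carrier (wreath_prod A d)"
    and eq: "phi (f, z) = phi (f', z')"
  shows "(f, z) = (f', z')"
proof -
  note cw = carrier_W[OF p] and cw' = carrier_W[OF q]
  have n0: "0 < n" by (rule n_pos)
  have zz: "z = z'"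
  proof -
    have "phi (f, z) ((real 0 + 0) / real n) = phi (f', z') ((real 0 + 0) / real n)" using eq by simp
    then have "(real (idx (FF f (0 + dot z) \<otimes> e 0)) + frac (0 + dot z)) / real n
             = (real (idx (FF f' (0 + dot z') \<otimes> e 0)) + frac (0 + dot z')) / real n"
      unfolding phi_eval[OF n0 order.refl zero_less_one] .
    then have "frac (0 + dot z) = frac (0 + dot z')" using code_inj frac_ge_0 frac_lt_1 by blast
    then have "frac (dot z) = frac (dot z')" by simp
    then obtain m where m: "dot z = dot z' + of_int m" by (elim frac_eqE)
    have "real_of_int (- m) + (\<Sum>i<d. real_of_int (z i - z' i) * \<alpha> i) + real_of_int 0 * \<beta> = 0"
      using m dot_diff[of z z'] unfolding dot_def by simp
    then have "\<forall>i<d. z i - z' i = 0" using indep[of "- m" "\<lambda>i. z i - z' i" 0] by simp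
    moreover have "\<forall>i\<ge>d. z i = 0 \<and> z' i = 0" using cw(2) cw'(2) unfolding Zd_def by simp
    ultimately show "z = z'" by (metis eq_iff_diff_eq_0 not_le ext)
  qed
  have FFt: "FF f (t + dot z) = FF f' (t + dot z)" if t: "0 \<le> t" "t < 1" for t
  proof -
    have "phi (f, z) ((real 0 + t) / real n) = phi (f', z) ((real 0 + t) / real n)" using eq zz by simp
    then have "(real (idx (FF f (t + dot z) \<otimes> e 0)) + frac (t + dot z)) / real n
             = (real (idx (FF f' (t + dot z) \<otimes> e 0)) + frac (t + dot z)) / real n"
      unfolding phi_eval[OF n0 t] .
    then have ii: "idx (FF f (t + dot z) \<otimes> e 0) = idx (FF f' (t + dot z) \<otimes> e 0)"
      using code_inj frac_ge_0 frac_lt_1 by blast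
    have c1: "FF f (t + dot z) \<in> carrier A" by (rule good_FF[OF cw(1)])
    have c2: "FF f' (t + dot z) \<in> carrier A" by (rule good_FF[OF cw'(1)])
    have c0: "e 0 \<in> carrier A" by (rule e_carr[OF n0])
    have ca: "FF f (t + dot z) \<otimes> e 0 \<in> carrier A" using c1 c0 by simp
    have cb: "FF f' (t + dot z) \<otimes> e 0 \<in> carrier A" using c2 c0 by simp
    have "FF f (t + dot z) \<otimes> e 0 = FF f' (t + dot z) \<otimes> e 0"
      using idx[OF ca] idx[OF cb] ii by metis
    then show ?thesis using right_cancel[OF c0 c1 c2] by simp
  qed
  have FFs: "FF f s = FF f' s" for s
  proof -
    have "FF f s = FF f (frac (s - dot z) + dot z)" using FF_frac[of f "s - dot z" "dot z"] by simp
    also have "\<dots> = FF f' (frac (s - dot z) + dot z)" by (rule FFt) (simp_all add: frac_lt_1)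
    also have "\<dots> = FF f' s" using FF_frac[of f' "s - dot z" "dot z"] by simp
    finally show ?thesis .
  qed
  have "f = f'"
  proof
    fix g show "f g = f' g"
    proof (cases "g \<in> Zd d")
      case True
      show ?thesis
        by (rule FF_determines[OF cw(1) cw'(1) _ _ True FFs]) (use cw(3) cw'(3) in blast)+
    next
      case False
      then show ?thesis using cw(3) cw'(3) by simp
    qed
  qed
  then show ?thesis using zz by simp
qed

lemma phi_hom: "phi \<in> hom (wreath_prod A d) IET_group"
proof (rule homI)
  fix x assume "x \<in> carrier (wreath_prod A d)"
  then show "phi x \<in> carrier IET_group"
    unfolding IET_group_def using phi_IET by (cases x) auto
next
  fix x y assume x: "x \<in> carrier (wreath_prod A d)" and y: "y \<in> carrier (wreath_prod A d)"
  obtain f z where fz: "x = (f, z)" by (cases x)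
  obtain f' z' where fz': "y = (f', z')" by (cases y)
  have gf: "good f" using carrier_W x fz by blast
  have gf': "good f'" using carrier_W y fz' by blast
  show "phi (x \<otimes>\<^bsub>wreath_prod A d\<^esub> y) = phi x \<otimes>\<^bsub>IET_group\<^esub> phi y"
    unfolding fz fz' mult_W IET_group_def using phi_comp[OF gf gf'] by (auto simp: fun_eq_iff)
qed

lemma phi_inj_on: "inj_on phi (carrier (wreath_prod A d))"
proof (rule inj_onI)
  fix x y assume x: "x \<in> carrier (wreath_prod A d)" and y: "y \<in> carrier (wreath_prod A d)" and "phi x = phi y"
  then show "x = y" using phi_inj by (cases x, cases y) blast
qed

end


lemma indep_gen:
  fixes x :: real
  assumes x: "\<forall>n (c::nat\<Rightarrow>int). (\<Sum>i\<le>n. real_of_int (c i) * x^i) = 0 \<longrightarrow> (\<forall>i\<le>n. c i = 0)"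
  and eq: "real_of_int m + (\<Sum>i<d. real_of_int (v i) * x^(Suc i)) + real_of_int k * x^(Suc d) = 0"
  shows "(\<forall>i<d. v i = 0) \<and> k = 0"
proof -
  define c where "c = (\<lambda>j. if j = 0 then m else if j \<le> d then v (j - 1) else k)"
  have "(\<Sum>j\<le>Suc d. real_of_int (c j) * x^j) = real_of_int (c 0) * x^0 + (\<Sum>i\<le>d. real_of_int (c (Suc i)) * x^(Suc i))"
    by (rule sum.atMost_Suc_shift)
  also have "(\<Sum>i\<le>d. real_of_int (c (Suc i)) * x^(Suc i)) = (\<Sum>i<d. real_of_int (c (Suc i)) * x^(Suc i)) + real_of_int (c (Suc d)) * x^(Suc d)"
    unfolding lessThan_Suc_atMost[symmetric] by (rule sum.lessThan_Suc)
  also have "(\<Sum>i<d. real_of_int (c (Suc i)) * x^(Suc i)) = (\<Sum>i<d. real_of_int (v i) * x^(Suc i))"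
    by (rule sum.cong) (auto simp: c_def)
  finally have "(\<Sum>j\<le>Suc d. real_of_int (c j) * x^j) = 0" using eq by (simp add: c_def)
  then have z: "\<forall>j\<le>Suc d. c j = 0" using x by blast
  have "\<forall>i<d. v i = 0"
  proof (intro allI impI)
    fix i assume "i < d"
    then have "c (Suc i) = v i" unfolding c_def by simp
    then show "v i = 0" using z \<open>i < d\<close> by (metis Suc_leI le_SucI)
  qed
  moreover have "k = 0" using z[rule_format, of "Suc d"] unfolding c_def by simp
  ultimately show ?thesis by simp
qed

theorem mainTheorem6:
  fixes A :: "('a, 'b) monoid_scheme" and d :: nat
  assumes "d \<ge> 1" and "comm_group A" and "finite (carrier A)"
  shows "\<exists>\<phi>. \<phi> \<in> hom (wreath_prod A d) IET_group \<and> inj_on \<phi> (carrier (wreath_prod A d))"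
proof -
  obtain x :: real where x: "\<forall>n (c::nat\<Rightarrow>int). (\<Sum>i\<le>n. real_of_int (c i) * x^i) = 0 \<longrightarrow> (\<forall>i\<le>n. c i = 0)"
    using exists_transc by blast
  define \<alpha> where "\<alpha> = (\<lambda>i. x ^ Suc i)"
  define \<beta> where "\<beta> = frac (x ^ Suc d)"
  define n where "n = card (carrier A)"
  obtain e where e: "bij_betw e {0..<n} (carrier A)" using ex_bij_betw_nat_finite[OF assms(3)] unfolding n_def by blast
  have e': "bij_betw e {..<n} (carrier A)" using e by (simp add: atLeast0LessThan)
  have indep: "(\<forall>i<d. v i = 0) \<and> k = 0"
    if "real_of_int m + (\<Sum>i<d. real_of_int (v i) * \<alpha> i) + real_of_int k * \<beta> = 0" for m v k
  proof (rule indep_gen[OF x, of "m - k * \<lfloor>x ^ Suc d\<rfloor>"])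
    show "real_of_int (m - k * \<lfloor>x ^ Suc d\<rfloor>) + (\<Sum>i<d. real_of_int (v i) * x ^ Suc i) + real_of_int k * x ^ Suc d = 0"
      using that unfolding \<alpha>_def \<beta>_def frac_def by (simp add: algebra_simps)
  qed
  have b0: "0 < \<beta>"
  proof (rule ccontr)
    assume "\<not> 0 < \<beta>"
    then have "\<beta> = 0" unfolding \<beta>_def using frac_ge_0[of "x ^ Suc d"] by linarith
    then have "real_of_int (- \<lfloor>x ^ Suc d\<rfloor>) + (\<Sum>i<d. real_of_int ((\<lambda>i. 0) i) * x ^ Suc i) + real_of_int 1 * x ^ Suc d = 0"
      unfolding \<beta>_def frac_def by simp
    then have "(1::int) = 0" using indep_gen[OF x, where m="- \<lfloor>x ^ Suc d\<rfloor>" and d=d and v="\<lambda>i. 0" and k=1] by simp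
    then show False by simp
  qed
  have b1: "\<beta> < 1" unfolding \<beta>_def by (rule frac_lt_1)
  interpret W: IETW A d n e \<alpha> \<beta>
    by (rule IETW.intro[OF assms(2)], unfold_locales) (use e' b0 b1 indep in auto)
  show ?thesis using W.phi_hom W.phi_inj_on by blast
qed


end
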